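(* Assume (A1)–(A5). Then the blow-up time function $T$ satisfies $|T(x)-T(y)|\le\frac{1}{1+\varepsilon_0}|x-y|$ for all $x,y\in B_{R^*}$, where $\varepsilon_0$ is the constant in (A4).
   Context: Let $p>1$ and $\mu>0$ with $p<1+2/\mu$, and let $R^*,T^*>0$. Write $B_R=\{x\in\mathbb{R}:|x|<R\}$ and $D_\pm=\partial_t\pm\partial_x$. Consider the system $D_-\phi=2^{-p}|\phi+\psi|^p-\frac{\mu}{1+t}\frac{\phi+\psi}{2}$, $D_+\psi=2^{-p}|\phi+\psi|^p-\frac{\mu}{1+t}\frac{\phi+\psi}{2}$, $\phi(x,0)=f(x)$, $\psi(x,0)=g(x)$. Fix $\gamma_1,\gamma_2>0$ with $\gamma_1+\gamma_2>\max\big(1,(\mu p 2^p)^{1/(p-1)}\big)$ and let $T_1=\frac{1}{(p-1)\mu}\ln\Big(\frac{2^{1-p}/\mu}{2^{1-p}/\mu-(\gamma_1+\gamma_2)^{1-p}}\Big)$. Assumptions: (A1) $T_1<T^*$. (A2) $f\ge\gamma_1$, $g\ge\gamma_2$ on $B_{R^*+T^*}$. (A3) $f,g\in\mathcal{C}^4(\overline{B_{R^*+T^*}})$. (A4) There is $\varepsilon_0>0$ with $2^{-p}(\gamma_1+\gamma_2)^p-\frac{\mu}{2}(\gamma_1+\gamma_2)\ge(2+\varepsilon_0)\max_{x\in B_{R^*+T^*}}(|f'(x)|+|g'(x)|)$. (A5) There is $\varepsilon_1\neq-1$ with $2^{-p}(2p-1)\big(1+\frac{\varepsilon_1}{2(1+\varepsilon_1)}\big)\big(1-\frac{1}{2p}\big)-2^{-p+1}p-\mu>0$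 such that $2^{-p}(\gamma_1+\gamma_2)^p-\frac{\mu}{2}(\gamma_1+\gamma_2)\ge(2+\varepsilon_1)\max_{x\in B_{R^*+T^*}}(|f'(x)|+|g'(x)|)$. Let $K_{R^*,T^*}=\{(x,t):t>0,\ |x-x_0|<T^*-t\ \text{for some } x_0\in B_{R^*}\}$. Define iterates $\phi_0\equiv\gamma_1$, $\psi_0\equiv\gamma_2$ and, with $\mathcal{N}_n(x,s)=2^{-p}|\phi_n+\psi_n|^p(x,s)-\frac{\mu}{1+s}\frac{(\phi_n+\psi_n)(x,s)}{2}$, $\phi_{n+1}(x,t)=f(x+t)+\int_0^t\mathcal{N}_n(x+t-s,s)\,ds$, $\psi_{n+1}(x,t)=g(x-t)+\int_0^t\mathcal{N}_n(x-t+s,s)\,ds$. Set $\phi=\sup_n\phi_n$, $\psi=\sup_n\psi_n$, and the blow-up time $T(x)=\sup\{t\in(0,T^* ):(\phi+\psi)(x,t)<\infty\}$ for $x\in B_{R^*}$. *)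

theory Defs
  imports "HOL-Analysis.Analysis"
begin

definition C_k_on :: "nat \<Rightarrow> (real \<Rightarrow> real) \<Rightarrow> real set \<Rightarrow> bool" where
  "C_k_on k f S \<longleftrightarrow> (\<exists>F :: nat \<Rightarrow> real \<Rightarrow> real.
      (\<forall>x\<in>S. F 0 x = f x) \<and>
      (\<forall>j<k. \<forall>x\<in>S. (F j has_real_derivative F (Suc j) x) (at x within S)) \<and>
      (\<forall>j\<le>k. continuous_on S (F j)))"

definition nonlin :: "real \<Rightarrow> real \<Rightarrow> real \<Rightarrow> real \<Rightarrow> real" where
  "nonlin p \<mu> u s = 2 powr (-p) * \<bar>u\<bar> powr p - \<mu> / (1 + s) * u / 2"

primrec iter :: "real \<Rightarrow> real \<Rightarrow> (real \<Rightarrow> real) \<Rightarrow> (real \<Rightarrow> real) \<Rightarrow> real \<Rightarrow> real \<Rightarrow> nat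
    \<Rightarrow> (real \<Rightarrow> real \<Rightarrow> real) \<times> (real \<Rightarrow> real \<Rightarrow> real)" where
  "iter p \<mu> f g \<gamma>1 \<gamma>2 0 = ((\<lambda>x t. \<gamma>1), (\<lambda>x t. \<gamma>2))"
| "iter p \<mu> f g \<gamma>1 \<gamma>2 (Suc n) =
     (let \<phi> = fst (iter p \<mu> f g \<gamma>1 \<gamma>2 n); \<psi> = snd (iter p \<mu> f g \<gamma>1 \<gamma>2 n);
          N = (\<lambda>x s. nonlin p \<mu> (\<phi> x s + \<psi> x s) s)
      in ((\<lambda>x t. f (x + t) + integral {0..t} (\<lambda>s. N (x + t - s) s)),
          (\<lambda>x t. g (x - t) + integral {0..t} (\<lambda>s. N (x - t + s) s))))"

definition phi_sup :: "real \<Rightarrow> real \<Rightarrow> (real \<Rightarrow> real) \<Rightarrow> (real \<Rightarrow> real) \<Rightarrow> real \<Rightarrow> real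
    \<Rightarrow> real \<Rightarrow> real \<Rightarrow> ereal" where
  "phi_sup p \<mu> f g \<gamma>1 \<gamma>2 x t = (SUP n. ereal (fst (iter p \<mu> f g \<gamma>1 \<gamma>2 n) x t))"

definition psi_sup :: "real \<Rightarrow> real \<Rightarrow> (real \<Rightarrow> real) \<Rightarrow> (real \<Rightarrow> real) \<Rightarrow> real \<Rightarrow> real
    \<Rightarrow> real \<Rightarrow> real \<Rightarrow> ereal" where
  "psi_sup p \<mu> f g \<gamma>1 \<gamma>2 x t = (SUP n. ereal (snd (iter p \<mu> f g \<gamma>1 \<gamma>2 n) x t))"

definition blowup_time :: "real \<Rightarrow> real \<Rightarrow> (real \<Rightarrow> real) \<Rightarrow> (real \<Rightarrow> real) \<Rightarrow> real \<Rightarrow> real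
    \<Rightarrow> real \<Rightarrow> real \<Rightarrow> real" where
  "blowup_time p \<mu> f g \<gamma>1 \<gamma>2 Tstar x =
     Sup {t. 0 < t \<and> t < Tstar \<and> phi_sup p \<mu> f g \<gamma>1 \<gamma>2 x t + psi_sup p \<mu> f g \<gamma>1 \<gamma>2 x t < \<infinity>}"

end

theory Submission
  imports Defs "HOL-Analysis.Analysis"
begin



lemma subst01:
  fixes k :: "real \<Rightarrow> real"
  assumes t: "t \<ge> 0"
  shows "integral {0..t} k = t * integral {0..1} (\<lambda>r. k (t * r))"
proof (cases "t = 0")
  case True then show ?thesis by simp
next
  case False
  with t have tp: "t > 0" by simp
  have img: "(\<lambda>x. x / t) ` {0..t} = {0..1}"
  proof
    show "(\<lambda>x. x / t) ` {0..t} \<subseteq> {0..1}" using tp by auto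
    show "{0..1} \<subseteq> (\<lambda>x. x / t) ` {0..t}"
    proof
      fix r :: real assume "r \<in> {0..1}"
      then have "t * r \<in> {0..t}" "r = (t*r)/t" using tp by (auto simp: mult_le_cancel_left1)
      then show "r \<in> (\<lambda>x. x / t) ` {0..t}" by blast
    qed
  qed
  have "integral {0..1} (\<lambda>r. k (t * r)) = (1 / \<bar>t\<bar>) *\<^sub>R integral {0..t} k"
    using integral_stretch_real[of t 0 t k] False img by simp
  then show ?thesis using tp by simp
qed




lemma nonlin_mono_s:
  assumes "u \<ge> 0" "0 \<le> s'" "s' \<le> s" "\<mu> > 0"
  shows "nonlin p \<mu> u s' \<le> nonlin p \<mu> u s"
proof -
  have "\<mu> / (1 + s) \<le> \<mu> / (1 + s')" using assms by (intro divide_left_mono) auto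
  then have "\<mu> / (1 + s) * u \<le> \<mu> / (1 + s') * u" using assms by (intro mult_right_mono) auto
  then have "\<mu> / (1 + s) * u / 2 \<le> \<mu> / (1 + s') * u / 2" by (rule divide_right_mono) auto
  then show ?thesis unfolding nonlin_def by linarith
qed

lemma nonlin_mono_u:
  assumes p: "p > 1" and mu: "\<mu> > 0" and gam: "\<gamma> > 0"
    and mc: "\<mu> / 2 \<le> p * 2 powr (-p) * \<gamma> powr (p - 1)"
    and vu: "\<gamma> \<le> v" "v \<le> u" and s: "s \<ge> 0"
  shows "nonlin p \<mu> v s \<le> nonlin p \<mu> u s"
proof -
  define c where "c = \<mu> / (1 + s) / 2"
  have c: "c \<le> \<mu> / 2" "c \<ge> 0" using s mu unfolding c_def by (auto simp: field_simps)
  define G where "G w = 2 powr (-p) * w powr p - c * w" for w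
  have "G v \<le> G u"
  proof (rule DERIV_nonneg_imp_increasing_open[OF vu(2)])
    fix w assume w: "v < w" "w < u"
    then have wp: "w > 0" using vu gam by simp
    have "(G has_real_derivative 2 powr (-p) * (p * w powr (p - 1)) - c) (at w)"
      unfolding G_def
      using wp by (auto intro!: derivative_eq_intros has_real_derivative_powr[OF wp, THEN DERIV_cmult] )
    moreover have "2 powr (-p) * (p * w powr (p - 1)) - c \<ge> 0"
    proof -
      have "\<gamma> powr (p - 1) \<le> w powr (p - 1)" using w vu gam p by (intro powr_mono2) auto
      then have "p * 2 powr (-p) * \<gamma> powr (p - 1) \<le> p * 2 powr (-p) * w powr (p - 1)"
        using p by (intro mult_left_mono) auto
      then show ?thesis using c mc by (simp add: algebra_simps)
    qed
    ultimately show "\<exists>y. (G has_real_derivative y) (at w) \<and> 0 \<le> y" by blast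
  next
    show "continuous_on {v..u} G" unfolding G_def using vu gam p
      by (intro continuous_intros continuous_on_powr') auto
  qed
  moreover have "\<bar>v\<bar> = v" "\<bar>u\<bar> = u" using vu gam by auto
  ultimately show ?thesis unfolding nonlin_def G_def c_def by (simp add: algebra_simps)
qed




definition Dc :: "real \<Rightarrow> (real \<times> real) set" where
  "Dc L = {z. 0 \<le> snd z \<and> \<bar>fst z\<bar> + snd z \<le> L}"

lemma path_in_Dc:
  assumes "z \<in> Dc L" "\<bar>e\<bar> = 1" "0 \<le> s" "s \<le> snd z"
  shows "(fst z + e * (snd z - s), s) \<in> Dc L"
proof -
  have "\<bar>fst z + e * (snd z - s)\<bar> \<le> \<bar>fst z\<bar> + \<bar>e\<bar> * \<bar>snd z - s\<bar>"
    by (metis abs_mult abs_triangle_ineq)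
  then show ?thesis using assms by (auto simp: Dc_def)
qed

lemma cont_path_integral:
  fixes h :: "real \<times> real \<Rightarrow> real"
  assumes hc: "continuous_on (Dc L) h" and e: "\<bar>e\<bar> = 1"
  shows "continuous_on (Dc L) (\<lambda>z. integral {0..snd z} (\<lambda>s. h (fst z + e * (snd z - s), s)))"
proof -
  have eq: "integral {0..snd z} (\<lambda>s. h (fst z + e * (snd z - s), s))
      = snd z * integral {0..1} (\<lambda>r. h (fst z + e * (snd z - snd z * r), snd z * r))"
    if "z \<in> Dc L" for z
    using subst01[of "snd z" "\<lambda>s. h (fst z + e * (snd z - s), s)"] that by (simp add: Dc_def)
  have c2: "continuous_on (Dc L \<times> cbox 0 1)
      (\<lambda>(z, r). h (fst z + e * (snd z - snd z * r), snd z * r))"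
  proof -
    have m: "continuous_on (Dc L \<times> cbox 0 1)
        (\<lambda>w. (fst (fst w) + e * (snd (fst w) - snd (fst w) * snd w), snd (fst w) * snd w))"
      by (intro continuous_intros)
    have im: "(\<lambda>w. (fst (fst w) + e * (snd (fst w) - snd (fst w) * snd w), snd (fst w) * snd w))
        ` (Dc L \<times> cbox 0 1) \<subseteq> Dc L"
    proof clarify
      fix x t r assume xt: "(x, t) \<in> Dc L" and r: "r \<in> cbox (0::real) 1"
      then have "0 \<le> t * r" "t * r \<le> t" using r by (auto simp: Dc_def intro: mult_left_le)
      then show "(fst (fst ((x, t), r)) + e * (snd (fst ((x, t), r)) - snd (fst ((x, t), r)) * snd ((x, t), r)),
          snd (fst ((x, t), r)) * snd ((x, t), r)) \<in> Dc L"
        using path_in_Dc[OF xt e, of "t * r"] by simp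
    qed
    show ?thesis using continuous_on_compose2[OF hc m im] by (simp add: case_prod_beta)
  qed
  have "continuous_on (Dc L) (\<lambda>z. snd z * integral {0..1} (\<lambda>r. h (fst z + e * (snd z - snd z * r), snd z * r)))"
    using integral_continuous_on_param[OF c2]
    by (intro continuous_intros) (simp add: cbox_interval)
  then show ?thesis by (rule continuous_on_eq) (simp add: eq)
qed

locale bsetup =
  fixes p \<mu> :: real and f g :: "real \<Rightarrow> real" and \<gamma>1 \<gamma>2 L :: real
  assumes p1: "p > 1" and mu: "\<mu> > 0"
    and contf: "continuous_on (cball 0 L) f" and contg: "continuous_on (cball 0 L) g"
begin

abbreviation "Ph n \<equiv> fst (iter p \<mu> f g \<gamma>1 \<gamma>2 n)"
abbreviation "Ps n \<equiv> snd (iter p \<mu> f g \<gamma>1 \<gamma>2 n)"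
abbreviation "hh n z \<equiv> nonlin p \<mu> (Ph n (fst z) (snd z) + Ps n (fst z) (snd z)) (snd z)"

lemma Ph_Suc: "Ph (Suc n) x t = f (x + t) + integral {0..t} (\<lambda>s. hh n (x + 1 * (t - s), s))"
  by (simp add: Let_def algebra_simps)
lemma Ps_Suc: "Ps (Suc n) x t = g (x - t) + integral {0..t} (\<lambda>s. hh n (x + (-1) * (t - s), s))"
  by (simp add: Let_def algebra_simps)

lemma cont_iter:
  "continuous_on (Dc L) (\<lambda>z. Ph n (fst z) (snd z)) \<and> continuous_on (Dc L) (\<lambda>z. Ps n (fst z) (snd z))"
proof (induction n)
  case 0
  then show ?case by (simp add: continuous_on_const)
next
  case (Suc n)
  have hc: "continuous_on (Dc L) (hh n)"
    unfolding nonlin_def using Suc p1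
    by (intro continuous_intros continuous_on_powr') (auto simp: Dc_def)
  have cf: "continuous_on (Dc L) (\<lambda>z. f (fst z + snd z))"
    by (rule continuous_on_compose2[OF contf]) (auto intro!: continuous_intros simp: Dc_def)
  have cg: "continuous_on (Dc L) (\<lambda>z. g (fst z - snd z))"
    by (rule continuous_on_compose2[OF contg]) (auto intro!: continuous_intros simp: Dc_def)
  show ?case unfolding Ph_Suc Ps_Suc
    using cf cg cont_path_integral[OF hc, of 1] cont_path_integral[OF hc, of "-1"]
    by (intro conjI continuous_intros) auto
qed

lemma hh_cont: "continuous_on (Dc L) (hh n)"
  unfolding nonlin_def using cont_iter[of n] p1
  by (intro continuous_intros continuous_on_powr') (auto simp: Dc_def)

lemma path_int:
  assumes "(x, t) \<in> Dc L" "\<bar>e\<bar> = 1"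
  shows "(\<lambda>s. hh n (x + e * (t - s), s)) integrable_on {0..t}"
proof (rule integrable_continuous_interval)
  have "continuous_on {0..t} (\<lambda>s. (x + e * (t - s), s))" by (intro continuous_intros)
  moreover have "(\<lambda>s. (x + e * (t - s), s)) ` {0..t} \<subseteq> Dc L"
    using path_in_Dc[OF assms(1,2)] by auto
  ultimately show "continuous_on {0..t} (\<lambda>s. hh n (x + e * (t - s), s))"
    using continuous_on_compose2[OF hh_cont] by blast
qed

end




definition Do :: "real \<Rightarrow> (real \<times> real) set" where
  "Do L = {z. 0 \<le> snd z \<and> \<bar>fst z\<bar> + snd z < L}"

lemma Do_Dc: "z \<in> Do L \<Longrightarrow> z \<in> Dc L"
  by (auto simp: Do_def Dc_def)

lemma path_in_Do:
  assumes "(x, t) \<in> Do L" "\<bar>e\<bar> = 1" "0 \<le> s" "s \<le> t"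
  shows "(x + e * (t - s), s) \<in> Do L"
proof -
  have "\<bar>x + e * (t - s)\<bar> \<le> \<bar>x\<bar> + \<bar>e\<bar> * \<bar>t - s\<bar>"
    by (metis abs_mult abs_triangle_ineq)
  then show ?thesis using assms by (auto simp: Do_def)
qed

locale bsetup2 = bsetup +
  fixes S \<epsilon> :: real
  assumes g1: "\<gamma>1 > 0" and g2: "\<gamma>2 > 0"
    and fge: "\<forall>x\<in>ball 0 L. \<gamma>1 \<le> f x" and gge: "\<forall>x\<in>ball 0 L. \<gamma>2 \<le> g x"
    and mc: "\<mu> / 2 \<le> p * 2 powr (-p) * (\<gamma>1 + \<gamma>2) powr (p - 1)"
    and eps: "\<epsilon> > 0" and S0: "S \<ge> 0"
    and N0ge: "(2 + \<epsilon>) * S \<le> 2 powr (-p) * (\<gamma>1 + \<gamma>2) powr p - \<mu> / 2 * (\<gamma>1 + \<gamma>2)"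
    and lipf: "\<forall>a\<in>ball 0 L. \<forall>b\<in>ball 0 L. \<bar>f a - f b\<bar> \<le> S * \<bar>a - b\<bar>"
    and lipg: "\<forall>a\<in>ball 0 L. \<forall>b\<in>ball 0 L. \<bar>g a - g b\<bar> \<le> S * \<bar>a - b\<bar>"
begin

definition "N0 = 2 powr (-p) * (\<gamma>1 + \<gamma>2) powr p - \<mu> / 2 * (\<gamma>1 + \<gamma>2)"

lemma N0_nonneg: "N0 \<ge> 0"
proof -
  have "(2 + \<epsilon>) * S \<ge> 0" using eps S0 by simp
  then show ?thesis using N0ge unfolding N0_def by linarith
qed

lemma nonlin_ge: assumes "\<gamma>1 + \<gamma>2 \<le> u" "0 \<le> s" shows "N0 \<le> nonlin p \<mu> u s"
proof -
  have "nonlin p \<mu> (\<gamma>1 + \<gamma>2) 0 \<le> nonlin p \<mu> (\<gamma>1 + \<gamma>2) s"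
    using assms g1 g2 mu by (intro nonlin_mono_s) auto
  also have "\<dots> \<le> nonlin p \<mu> u s"
    using assms g1 g2 mu p1 mc by (intro nonlin_mono_u[of p \<mu> "\<gamma>1 + \<gamma>2"]) auto
  finally show ?thesis using g1 g2 unfolding nonlin_def N0_def by simp
qed

lemma lower: "z \<in> Do L \<Longrightarrow> \<gamma>1 \<le> Ph n (fst z) (snd z) \<and> \<gamma>2 \<le> Ps n (fst z) (snd z)"
proof (induction n arbitrary: z)
  case 0
  then show ?case by simp
next
  case (Suc n)
  obtain x t where z: "z = (x, t)" by force
  have xt: "(x, t) \<in> Do L" using Suc z by simp
  have hpos: "0 \<le> hh n (x + e * (t - s), s)" if "\<bar>e\<bar> = 1" "s \<in> {0..t}" for e s
  proof -
    have w: "(x + e * (t - s), s) \<in> Do L" using path_in_Do[OF xt that(1)] that(2) by auto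
    have "N0 \<le> hh n (x + e * (t - s), s)"
      using Suc.IH[OF w] w by (intro nonlin_ge) (auto simp: Do_def)
    then show ?thesis using N0_nonneg by linarith
  qed
  have i1: "0 \<le> integral {0..t} (\<lambda>s. hh n (x + 1 * (t - s), s))"
    using path_int[OF Do_Dc[OF xt], of 1] hpos[of 1] by (intro integral_nonneg) auto
  have i2: "0 \<le> integral {0..t} (\<lambda>s. hh n (x + (-1) * (t - s), s))"
    using path_int[OF Do_Dc[OF xt], of "-1"] hpos[of "-1"] by (intro integral_nonneg) auto
  have "x + t \<in> ball 0 L" "x - t \<in> ball 0 L" using xt by (auto simp: Do_def)
  then have "\<gamma>1 \<le> f (x + t)" "\<gamma>2 \<le> g (x - t)" using fge gge by auto
  then show ?case unfolding z Ph_Suc Ps_Suc using i1 i2 by simp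
qed

lemma key_integral:
  assumes hm: "\<And>a s' b s. (a, s') \<in> Do L \<Longrightarrow> (b, s) \<in> Do L \<Longrightarrow> s' \<le> s \<Longrightarrow>
      \<bar>a - b\<bar> \<le> (1 + \<epsilon>) * (s - s') \<Longrightarrow> hh n (a, s') \<le> hh n (b, s)"
    and hl: "\<And>w. w \<in> Do L \<Longrightarrow> N0 \<le> hh n w"
    and xt: "(x, t') \<in> Do L" and yt: "(y, t) \<in> Do L" and tt: "t' \<le> t"
    and c: "\<bar>x - y\<bar> \<le> (1 + \<epsilon>) * (t - t')" and e: "\<bar>e\<bar> = 1"
  shows "integral {0..t'} (\<lambda>s. hh n (x + e * (t' - s), s)) + (t - t') * N0
         \<le> integral {0..t} (\<lambda>s. hh n (y + e * (t - s), s))"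
proof -
  define k where "k s = hh n (y + e * (t - s), s)" for s
  define \<delta> where "\<delta> = t - t'"
  have t0: "0 \<le> t'" using xt by (auto simp: Do_def)
  have d0: "0 \<le> \<delta>" "\<delta> \<le> t" using tt t0 by (auto simp: \<delta>_def)
  have kint: "k integrable_on {0..t}" unfolding k_def using path_int[OF Do_Dc[OF yt] e] .
  have comb: "integral {0..\<delta>} k + integral {\<delta>..t} k = integral {0..t} k"
    using Henstock_Kurzweil_Integration.integral_combine[OF d0 kint] .
  have int1: "\<delta> * N0 \<le> integral {0..\<delta>} k"
  proof -
    have "integral {0..\<delta>} (\<lambda>s. N0) \<le> integral {0..\<delta>} k"
    proof (rule integral_le)
      show "k integrable_on {0..\<delta>}" using kint d0 by (intro integrable_on_subinterval[OF kint]) auto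
      fix s assume "s \<in> {0..\<delta>}"
      then have "(y + e * (t - s), s) \<in> Do L" using path_in_Do[OF yt e, of s] d0 by auto
      then show "N0 \<le> k s" unfolding k_def by (rule hl)
    qed auto
    then show ?thesis using d0 by simp
  qed
  have kint2: "k integrable_on {\<delta>..t}" using kint d0 by (intro integrable_on_subinterval[OF kint]) auto
  then have "(k has_integral integral {\<delta>..t} k) {\<delta>..t}" by blast
  from has_integral_shift_real_ivl[OF this, of \<delta>]
  have sh: "((\<lambda>s. k (s + \<delta>)) has_integral integral {\<delta>..t} k) {0..t'}"
    by (simp add: \<delta>_def)
  have int2: "integral {0..t'} (\<lambda>s. hh n (x + e * (t' - s), s)) \<le> integral {0..t'} (\<lambda>s. k (s + \<delta>))"
  proof (rule integral_le)
    show "(\<lambda>s. hh n (x + e * (t' - s), s)) integrable_on {0..t'}"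
      using path_int[OF Do_Dc[OF xt] e] .
    show "(\<lambda>s. k (s + \<delta>)) integrable_on {0..t'}" using sh by blast
    fix s assume s: "s \<in> {0..t'}"
    have a: "(x + e * (t' - s), s) \<in> Do L" using path_in_Do[OF xt e, of s] s by auto
    have "(y + e * (t - (s + \<delta>)), s + \<delta>) \<in> Do L"
      using path_in_Do[OF yt e, of "s + \<delta>"] s d0 by (auto simp: \<delta>_def)
    then have b: "(y + e * (t' - s), s + \<delta>) \<in> Do L" by (simp add: \<delta>_def algebra_simps)
    have "hh n (x + e * (t' - s), s) \<le> hh n (y + e * (t' - s), s + \<delta>)"
      using hm[OF a b] c d0 by (simp add: \<delta>_def)
    then show "hh n (x + e * (t' - s), s) \<le> k (s + \<delta>)"
      unfolding k_def by (simp add: \<delta>_def algebra_simps)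
  qed
  have "integral {0..t'} (\<lambda>s. k (s + \<delta>)) = integral {\<delta>..t} k" using sh by (rule integral_unique)
  then show ?thesis using comb int1 int2 unfolding k_def \<delta>_def by linarith
qed

lemma budget:
  assumes "0 \<le> \<delta>" "\<bar>x - y\<bar> \<le> (1 + \<epsilon>) * \<delta>" "\<bar>A - B\<bar> \<le> S * \<bar>a - b\<bar>" "\<bar>a - b\<bar> \<le> \<bar>x - y\<bar> + \<delta>"
  shows "B \<le> A + \<delta> * N0"
proof -
  have "S * \<bar>a - b\<bar> \<le> S * (\<bar>x - y\<bar> + \<delta>)" using assms S0 by (intro mult_left_mono) auto
  moreover have "S * \<bar>x - y\<bar> \<le> S * ((1 + \<epsilon>) * \<delta>)" using assms S0 by (intro mult_left_mono) auto
  moreover have "\<delta> * ((2 + \<epsilon>) * S) \<le> \<delta> * N0" using assms N0ge unfolding N0_def by (intro mult_left_mono) auto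
  moreover have "\<delta> * ((2 + \<epsilon>) * S) = S * \<delta> + S * ((1 + \<epsilon>) * \<delta>)" by (simp add: algebra_simps)
  ultimately show ?thesis using assms(3) by (simp add: algebra_simps abs_le_iff)
qed

lemma cone:
  "(x, t') \<in> Do L \<Longrightarrow> (y, t) \<in> Do L \<Longrightarrow> t' \<le> t \<Longrightarrow> \<bar>x - y\<bar> \<le> (1 + \<epsilon>) * (t - t') \<Longrightarrow>
   Ph n x t' \<le> Ph n y t \<and> Ps n x t' \<le> Ps n y t"
proof (induction n arbitrary: x t' y t)
  case 0
  then show ?case by simp
next
  case (Suc n)
  have hm: "hh n (a, s') \<le> hh n (b, s)" if a: "(a, s') \<in> Do L" and b: "(b, s) \<in> Do L"
    and ss: "s' \<le> s" and ab: "\<bar>a - b\<bar> \<le> (1 + \<epsilon>) * (s - s')" for a s' b s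
  proof -
    have le: "Ph n a s' + Ps n a s' \<le> Ph n b s + Ps n b s" using Suc.IH[OF a b ss ab] by simp
    have lo: "\<gamma>1 + \<gamma>2 \<le> Ph n a s' + Ps n a s'" using lower[OF a, of n] by simp
    have s0: "0 \<le> s'" using a by (auto simp: Do_def)
    have "hh n (a, s') \<le> nonlin p \<mu> (Ph n b s + Ps n b s) s'"
      using nonlin_mono_u[OF p1 mu _ mc lo le s0] g1 g2 by simp
    also have "\<dots> \<le> nonlin p \<mu> (Ph n b s + Ps n b s) s"
      using lo le s0 ss g1 g2 mu by (intro nonlin_mono_s) auto
    also have "\<dots> = hh n (b, s)" by simp
    finally show ?thesis .
  qed
  have hl: "N0 \<le> hh n w" if w: "w \<in> Do L" for w
    using lower[OF w, of n] w by (intro nonlin_ge) (auto simp: Do_def)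
  note k1 = key_integral[OF hm hl Suc.prems(1,2,3,4), of 1]
  note k2 = key_integral[OF hm hl Suc.prems(1,2,3,4), of "-1"]
  have yb: "y + t \<in> ball 0 L" "y - t \<in> ball 0 L" "x + t' \<in> ball 0 L" "x - t' \<in> ball 0 L"
    using Suc.prems by (auto simp: Do_def)
  have d0: "0 \<le> t - t'" using Suc.prems by simp
  have tr1: "\<bar>y + t - (x + t')\<bar> \<le> \<bar>x - y\<bar> + (t - t')" using d0 by linarith
  have tr2: "\<bar>y - t - (x - t')\<bar> \<le> \<bar>x - y\<bar> + (t - t')" using d0 by linarith
  have "f (x + t') \<le> f (y + t) + (t - t') * N0"
    using budget[OF d0 Suc.prems(4) _ tr1, of "f (y + t)" "f (x + t')"] lipf yb by blast
  moreover have "g (x - t') \<le> g (y - t) + (t - t') * N0"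
    using budget[OF d0 Suc.prems(4) _ tr2, of "g (y - t)" "g (x - t')"] lipg yb by blast
  ultimately show ?case unfolding Ph_Suc Ps_Suc using k1 k2 by simp
qed

lemma nonlin_upper:
  assumes "0 \<le> u" "u \<le> 2 * K" "0 \<le> s"
  shows "nonlin p \<mu> u s \<le> K powr p"
proof -
  have "0 \<le> \<mu> / (1 + s) * u / 2" using assms mu by simp
  moreover have "\<bar>u\<bar> powr p \<le> (2 * K) powr p" using assms p1 by (intro powr_mono2) auto
  moreover have "(2 * K) powr p = 2 powr p * K powr p" using assms by (simp add: powr_mult)
  moreover have "2 powr (-p) * 2 powr p = 1" by (simp add: powr_minus)
  ultimately have "2 powr (-p) * \<bar>u\<bar> powr p \<le> K powr p"
    by (metis (no_types, lifting) mult.assoc mult.left_neutral mult_left_mono powr_ge_zero)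
  then show ?thesis unfolding nonlin_def using \<open>0 \<le> \<mu> / (1 + s) * u / 2\<close> by linarith
qed

lemma upper:
  assumes fK: "\<forall>a\<in>ball 0 L. f a \<le> K - 1 \<and> g a \<le> K - 1" and gK: "\<gamma>1 \<le> K" "\<gamma>2 \<le> K"
    and tau: "\<tau> * K powr p \<le> 1"
  shows "(x, t) \<in> Do L \<Longrightarrow> t \<le> \<tau> \<Longrightarrow> Ph n x t \<le> K \<and> Ps n x t \<le> K"
proof (induction n arbitrary: x t)
  case 0
  then show ?case using gK by simp
next
  case (Suc n)
  have t0: "0 \<le> t" using Suc.prems by (auto simp: Do_def)
  have bnd: "integral {0..t} (\<lambda>s. hh n (x + e * (t - s), s)) \<le> 1" if e: "\<bar>e\<bar> = 1" for e
  proof -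
    have "integral {0..t} (\<lambda>s. hh n (x + e * (t - s), s)) \<le> integral {0..t} (\<lambda>s. K powr p)"
    proof (rule integral_le)
      show "(\<lambda>s. hh n (x + e * (t - s), s)) integrable_on {0..t}"
        using path_int[OF Do_Dc[OF Suc.prems(1)] e] .
      fix s assume s: "s \<in> {0..t}"
      then have w: "(x + e * (t - s), s) \<in> Do L" using path_in_Do[OF Suc.prems(1) e, of s] by auto
      have "Ph n (x + e * (t - s)) s \<le> K \<and> Ps n (x + e * (t - s)) s \<le> K"
        using Suc.IH[OF w] s Suc.prems(2) by auto
      moreover have "\<gamma>1 \<le> Ph n (x + e * (t - s)) s \<and> \<gamma>2 \<le> Ps n (x + e * (t - s)) s"
        using lower[OF w] by simp
      ultimately show "hh n (x + e * (t - s), s) \<le> K powr p"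
        using g1 g2 s by (intro nonlin_upper) auto
    qed auto
    also have "\<dots> = t * K powr p" using t0 by simp
    also have "\<dots> \<le> \<tau> * K powr p" using Suc.prems(2) by (intro mult_right_mono) auto
    finally show ?thesis using tau by linarith
  qed
  have yb: "x + t \<in> ball 0 L" "x - t \<in> ball 0 L" using Suc.prems by (auto simp: Do_def)
  then show ?case unfolding Ph_Suc Ps_Suc using bnd[of 1] bnd[of "-1"] fK by force
qed

end



definition Aset where
  "Aset p \<mu> f g \<gamma>1 \<gamma>2 Tstar x =
     {t. 0 < t \<and> t < Tstar \<and> phi_sup p \<mu> f g \<gamma>1 \<gamma>2 x t + psi_sup p \<mu> f g \<gamma>1 \<gamma>2 x t < \<infinity>}"

lemma blowup_Aset: "blowup_time p \<mu> f g \<gamma>1 \<gamma>2 Tstar x = Sup (Aset p \<mu> f g \<gamma>1 \<gamma>2 Tstar x)"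
  unfolding blowup_time_def Aset_def ..

context bsetup2
begin

abbreviation "AA Tstar x \<equiv> Aset p \<mu> f g \<gamma>1 \<gamma>2 Tstar x"

lemma A_bdd: "bdd_above (AA Tstar x)"
  unfolding Aset_def by (rule bdd_aboveI[of _ Tstar]) auto

lemma A_mono:
  assumes L: "L = R + Tstar" and x: "x \<in> ball 0 R" and y: "y \<in> ball 0 R"
    and t: "t \<in> AA Tstar y" and c: "0 < t - \<bar>x - y\<bar> / (1 + \<epsilon>)"
  shows "t - \<bar>x - y\<bar> / (1 + \<epsilon>) \<in> AA Tstar x"
proof -
  define t' where "t' = t - \<bar>x - y\<bar> / (1 + \<epsilon>)"
  have tt: "0 < t" "t < Tstar" using t by (auto simp: Aset_def)
  have d: "\<bar>x - y\<bar> / (1 + \<epsilon>) \<ge> 0" using eps by simp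
  have xt: "(x, t') \<in> Do L" using x tt c d L by (auto simp: Do_def t'_def)
  have yt: "(y, t) \<in> Do L" using y tt L by (auto simp: Do_def)
  have "\<bar>x - y\<bar> \<le> (1 + \<epsilon>) * (t - t')" using eps by (simp add: t'_def)
  then have le: "Ph n x t' \<le> Ph n y t \<and> Ps n x t' \<le> Ps n y t" for n
    using cone[OF xt yt] d by (simp add: t'_def)
  have "phi_sup p \<mu> f g \<gamma>1 \<gamma>2 x t' \<le> phi_sup p \<mu> f g \<gamma>1 \<gamma>2 y t"
    unfolding phi_sup_def using le by (intro SUP_mono) auto
  moreover have "psi_sup p \<mu> f g \<gamma>1 \<gamma>2 x t' \<le> psi_sup p \<mu> f g \<gamma>1 \<gamma>2 y t"
    unfolding psi_sup_def using le by (intro SUP_mono) auto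
  ultimately have "phi_sup p \<mu> f g \<gamma>1 \<gamma>2 x t' + psi_sup p \<mu> f g \<gamma>1 \<gamma>2 x t'
      \<le> phi_sup p \<mu> f g \<gamma>1 \<gamma>2 y t + psi_sup p \<mu> f g \<gamma>1 \<gamma>2 y t" by (rule add_mono)
  also have "\<dots> < \<infinity>" using t by (simp add: Aset_def)
  finally have "t' \<in> AA Tstar x" using c tt d unfolding Aset_def t'_def by auto
  then show ?thesis by (simp add: t'_def)
qed

lemma A_nonempty:
  assumes L: "L = R + Tstar" and T0: "Tstar > 0" and x: "x \<in> ball 0 R"
  shows "AA Tstar x \<noteq> {}"
proof -
  have "bounded ((\<lambda>a. \<bar>f a\<bar> + \<bar>g a\<bar>) ` cball 0 L)"
    by (intro compact_imp_bounded compact_continuous_image continuous_intros contf contg) auto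
  then obtain B where B: "\<forall>a\<in>cball 0 L. \<bar>f a\<bar> + \<bar>g a\<bar> \<le> B"
    unfolding bounded_iff by auto
  define K where "K = \<bar>B\<bar> + 1 + \<gamma>1 + \<gamma>2"
  have K0: "K > 0" using g1 g2 by (simp add: K_def)
  define \<tau> where "\<tau> = min (Tstar / 2) (1 / K powr p)"
  have tau0: "0 < \<tau>" "\<tau> < Tstar" using T0 K0 by (auto simp: \<tau>_def)
  have "\<tau> * K powr p \<le> (1 / K powr p) * K powr p"
    by (intro mult_right_mono) (auto simp: \<tau>_def)
  then have tauK: "\<tau> * K powr p \<le> 1" using K0 by simp
  have fK: "\<forall>a\<in>ball 0 L. f a \<le> K - 1 \<and> g a \<le> K - 1"
  proof
    fix a :: real assume "a \<in> ball 0 L"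
    then have "\<bar>f a\<bar> + \<bar>g a\<bar> \<le> B" using B by auto
    then show "f a \<le> K - 1 \<and> g a \<le> K - 1" using g1 g2 unfolding K_def by auto
  qed
  have xt: "(x, \<tau>) \<in> Do L" using x tau0 L by (auto simp: Do_def)
  have ub: "Ph n x \<tau> \<le> K \<and> Ps n x \<tau> \<le> K" for n
    using upper[OF fK _ _ tauK xt] g1 g2 by (auto simp: K_def)
  have "phi_sup p \<mu> f g \<gamma>1 \<gamma>2 x \<tau> \<le> ereal K"
    unfolding phi_sup_def using ub by (intro SUP_least) auto
  moreover have "psi_sup p \<mu> f g \<gamma>1 \<gamma>2 x \<tau> \<le> ereal K"
    unfolding psi_sup_def using ub by (intro SUP_least) auto
  ultimately have "phi_sup p \<mu> f g \<gamma>1 \<gamma>2 x \<tau> + psi_sup p \<mu> f g \<gamma>1 \<gamma>2 x \<tau> \<le> ereal K + ereal K"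
    by (rule add_mono)
  also have "\<dots> < \<infinity>" by simp
  finally have "\<tau> \<in> AA Tstar x" using tau0 by (simp add: Aset_def)
  then show ?thesis by blast
qed

lemma T_half:
  assumes L: "L = R + Tstar" and T0: "Tstar > 0" and x: "x \<in> ball 0 R" and y: "y \<in> ball 0 R"
  shows "Sup (AA Tstar y) \<le> Sup (AA Tstar x) + \<bar>x - y\<bar> / (1 + \<epsilon>)"
proof -
  obtain t0 where t0: "t0 \<in> AA Tstar x" using A_nonempty[OF L T0 x] by blast
  have t0p: "0 < t0" using t0 by (auto simp: Aset_def)
  have t0le: "t0 \<le> Sup (AA Tstar x)" using t0 A_bdd by (rule cSup_upper)
  have "t - \<bar>x - y\<bar> / (1 + \<epsilon>) \<le> Sup (AA Tstar x)" if t: "t \<in> AA Tstar y" for t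
  proof (cases "0 < t - \<bar>x - y\<bar> / (1 + \<epsilon>)")
    case True
    from A_mono[OF L x y t True] A_bdd show ?thesis by (rule cSup_upper)
  next
    case False
    then show ?thesis using t0p t0le by linarith
  qed
  then have "Sup (AA Tstar y) \<le> Sup (AA Tstar x) + \<bar>x - y\<bar> / (1 + \<epsilon>)"
    using A_nonempty[OF L T0 y] by (intro cSup_least) (auto simp: algebra_simps)
  then show ?thesis .
qed

lemma T_lip:
  assumes L: "L = R + Tstar" and T0: "Tstar > 0" and x: "x \<in> ball 0 R" and y: "y \<in> ball 0 R"
  shows "\<bar>blowup_time p \<mu> f g \<gamma>1 \<gamma>2 Tstar x - blowup_time p \<mu> f g \<gamma>1 \<gamma>2 Tstar y\<bar>
           \<le> 1 / (1 + \<epsilon>) * \<bar>x - y\<bar>"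
  using T_half[OF L T0 x y] T_half[OF L T0 y x] unfolding blowup_Aset
  by (simp add: abs_minus_commute abs_le_iff algebra_simps)

end



lemma Ck_extract:
  fixes f :: "real \<Rightarrow> real"
  assumes "C_k_on 4 f (cball 0 L)"
  shows "continuous_on (cball 0 L) f \<and>
    (\<exists>f'. continuous_on (cball 0 L) f' \<and> (\<forall>x\<in>ball 0 L. (f has_real_derivative f' x) (at x)))"
proof -
  obtain F :: "nat \<Rightarrow> real \<Rightarrow> real" where F0: "\<forall>x\<in>cball 0 L. F 0 x = f x"
    and Fd: "\<forall>j<4. \<forall>x\<in>cball 0 L. (F j has_real_derivative F (Suc j) x) (at x within cball 0 L)"
    and Fc: "\<forall>j\<le>4. continuous_on (cball 0 L) (F j)"
    using assms unfolding C_k_on_def by blast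
  have "continuous_on (cball 0 L) (F 0)" using Fc by simp
  then have c: "continuous_on (cball 0 L) f" using F0 by (metis continuous_on_cong)
  have "(f has_real_derivative F 1 x) (at x)" if x: "x \<in> ball 0 L" for x
  proof -
    have "(F 0 has_real_derivative F 1 x) (at x within cball 0 L)" using Fd x by auto
    moreover have "at x within cball 0 L = at x" using x by (intro at_within_interior) auto
    ultimately have "(F 0 has_real_derivative F 1 x) (at x)" by simp
    then show ?thesis
      by (rule has_field_derivative_transform_within_open[OF _ open_ball x]) (use F0 in auto)
  qed
  moreover have "continuous_on (cball 0 L) (F 1)" using Fc by simp
  ultimately show ?thesis using c by blast
qed

lemma mc_lemma:
  fixes p \<mu> \<gamma> :: real
  assumes p: "p > 1" and mu: "\<mu> > 0" and g: "\<gamma> > (\<mu> * p * 2 powr p) powr (1 / (p - 1))"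
  shows "\<mu> / 2 \<le> p * 2 powr (-p) * \<gamma> powr (p - 1)"
proof -
  define a where "a = \<mu> * p * 2 powr p"
  have a0: "a > 0" using p mu by (simp add: a_def)
  have "(a powr (1 / (p - 1))) powr (p - 1) < \<gamma> powr (p - 1)"
    using g p by (intro powr_less_mono2) (auto simp: a_def)
  moreover have "(a powr (1 / (p - 1))) powr (p - 1) = a" using p a0 by (simp add: powr_powr)
  ultimately have ga: "a < \<gamma> powr (p - 1)" by simp
  have "p * 2 powr (-p) * a \<le> p * 2 powr (-p) * \<gamma> powr (p - 1)"
    using ga p by (intro mult_left_mono) auto
  moreover have "p * 2 powr (-p) * a = \<mu> * p * p"
    unfolding a_def by (simp add: powr_minus field_simps)
  moreover have "\<mu> / 2 \<le> \<mu> * p * p"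
  proof -
    have "1 \<le> p * p" using p by (metis less_eq_real_def mult_le_cancel_left1 less_trans zero_less_one)
    then have "\<mu> * 1 \<le> \<mu> * (p * p)" using mu by (intro mult_left_mono) auto
    then show ?thesis using mu by simp
  qed
  ultimately show ?thesis by linarith
qed

lemma lip_from_deriv:
  fixes f f' :: "real \<Rightarrow> real"
  assumes d: "\<forall>x\<in>ball 0 L. (f has_real_derivative f' x) (at x)" and b: "\<forall>x\<in>ball 0 L. \<bar>f' x\<bar> \<le> S"
  shows "\<forall>a\<in>ball 0 L. \<forall>b\<in>ball 0 L. \<bar>f a - f b\<bar> \<le> S * \<bar>a - b\<bar>"
proof (intro ballI)
  fix a b :: real assume ab: "a \<in> ball 0 L" "b \<in> ball 0 L"
  have "norm (f a - f b) \<le> S * norm (a - b)"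
    by (rule field_differentiable_bound[OF convex_ball _ _ ab])
      (use d b in \<open>auto intro: has_field_derivative_at_within\<close>)
  then show "\<bar>f a - f b\<bar> \<le> S * \<bar>a - b\<bar>" by simp
qed




theorem theorem3p3:
  fixes p \<mu> Rstar Tstar \<gamma>1 \<gamma>2 \<epsilon>0 \<epsilon>1 :: real and f g :: "real \<Rightarrow> real"
  assumes hp: "p > 1" and hmu: "\<mu> > 0" and hpmu: "p < 1 + 2 / \<mu>"
    and hR: "Rstar > 0" and hT: "Tstar > 0"
    and hg1: "\<gamma>1 > 0" and hg2: "\<gamma>2 > 0"
    and hgam: "\<gamma>1 + \<gamma>2 > max 1 ((\<mu> * p * 2 powr p) powr (1 / (p - 1)))"
    and A1: "1 / ((p - 1) * \<mu>) *
               ln ((2 powr (1 - p) / \<mu>) / (2 powr (1 - p) / \<mu> - (\<gamma>1 + \<gamma>2) powr (1 - p)))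
             < Tstar"
    and A2: "\<forall>x\<in>ball 0 (Rstar + Tstar). f x \<ge> \<gamma>1 \<and> g x \<ge> \<gamma>2"
    and A3: "C_k_on 4 f (cball 0 (Rstar + Tstar)) \<and> C_k_on 4 g (cball 0 (Rstar + Tstar))"
    and A4: "\<epsilon>0 > 0 \<and>
             2 powr (-p) * (\<gamma>1 + \<gamma>2) powr p - \<mu> / 2 * (\<gamma>1 + \<gamma>2)
               \<ge> (2 + \<epsilon>0) * (SUP x\<in>ball 0 (Rstar + Tstar). \<bar>deriv f x\<bar> + \<bar>deriv g x\<bar>)"
    and A5: "\<epsilon>1 \<noteq> -1 \<and>
             2 powr (-p) * (2 * p - 1) * (1 + \<epsilon>1 / (2 * (1 + \<epsilon>1))) * (1 - 1 / (2 * p))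
               - 2 powr (-p + 1) * p - \<mu> > 0 \<and>
             2 powr (-p) * (\<gamma>1 + \<gamma>2) powr p - \<mu> / 2 * (\<gamma>1 + \<gamma>2)
               \<ge> (2 + \<epsilon>1) * (SUP x\<in>ball 0 (Rstar + Tstar). \<bar>deriv f x\<bar> + \<bar>deriv g x\<bar>)"
  shows "\<forall>x\<in>ball 0 Rstar. \<forall>y\<in>ball 0 Rstar.
           \<bar>blowup_time p \<mu> f g \<gamma>1 \<gamma>2 Tstar x - blowup_time p \<mu> f g \<gamma>1 \<gamma>2 Tstar y\<bar>
             \<le> 1 / (1 + \<epsilon>0) * \<bar>x - y\<bar>"
proof -
  define L where "L = Rstar + Tstar"
  have L0: "L > 0" using hR hT by (simp add: L_def)
  obtain f' where cf: "continuous_on (cball 0 L) f" and cf': "continuous_on (cball 0 L) f'"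
    and df: "\<forall>x\<in>ball 0 L. (f has_real_derivative f' x) (at x)"
    using Ck_extract[of f L] A3 unfolding L_def by blast
  obtain g' where cg: "continuous_on (cball 0 L) g" and cg': "continuous_on (cball 0 L) g'"
    and dg: "\<forall>x\<in>ball 0 L. (g has_real_derivative g' x) (at x)"
    using Ck_extract[of g L] A3 unfolding L_def by blast
  have "bounded ((\<lambda>a. \<bar>f' a\<bar> + \<bar>g' a\<bar>) ` cball 0 L)"
    by (intro compact_imp_bounded compact_continuous_image continuous_intros cf' cg') auto
  then obtain M where M: "\<forall>a\<in>cball 0 L. \<bar>f' a\<bar> + \<bar>g' a\<bar> \<le> M"
    unfolding bounded_iff by auto
  have dd: "deriv f x = f' x" "deriv g x = g' x" if "x \<in> ball 0 L" for x
    using df dg that by (auto intro: DERIV_imp_deriv)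
  define S where "S = (SUP x\<in>ball 0 L. \<bar>deriv f x\<bar> + \<bar>deriv g x\<bar>)"
  have bdd: "bdd_above ((\<lambda>x. \<bar>deriv f x\<bar> + \<bar>deriv g x\<bar>) ` ball 0 L)"
  proof (rule bdd_aboveI[of _ M])
    fix v assume "v \<in> (\<lambda>x. \<bar>deriv f x\<bar> + \<bar>deriv g x\<bar>) ` ball 0 L"
    then obtain x where x: "x \<in> ball 0 L" "v = \<bar>deriv f x\<bar> + \<bar>deriv g x\<bar>" by blast
    then show "v \<le> M" using M dd[OF x(1)] by auto
  qed
  have Sup: "\<bar>f' x\<bar> + \<bar>g' x\<bar> \<le> S" if x: "x \<in> ball 0 L" for x
    using cSUP_upper[OF x bdd] dd[OF x] unfolding S_def by simp
  have S0: "S \<ge> 0" using Sup[of 0] L0 by (simp; linarith)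
  have lipf: "\<forall>a\<in>ball 0 L. \<forall>b\<in>ball 0 L. \<bar>f a - f b\<bar> \<le> S * \<bar>a - b\<bar>"
    using Sup by (intro lip_from_deriv[OF df]) (smt (verit) abs_ge_zero)
  have lipg: "\<forall>a\<in>ball 0 L. \<forall>b\<in>ball 0 L. \<bar>g a - g b\<bar> \<le> S * \<bar>a - b\<bar>"
    using Sup by (intro lip_from_deriv[OF dg]) (smt (verit) abs_ge_zero)
  have mc: "\<mu> / 2 \<le> p * 2 powr (-p) * (\<gamma>1 + \<gamma>2) powr (p - 1)"
    using hgam by (intro mc_lemma[OF hp hmu]) simp
  interpret bsetup2 p \<mu> f g \<gamma>1 \<gamma>2 L S \<epsilon>0
  proof
    show "(2 + \<epsilon>0) * S \<le> 2 powr (-p) * (\<gamma>1 + \<gamma>2) powr p - \<mu> / 2 * (\<gamma>1 + \<gamma>2)"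
      using A4 unfolding S_def L_def by simp
  qed (use hp hmu cf cg hg1 hg2 A2 mc A4 S0 lipf lipg in \<open>auto simp: L_def\<close>)
  show ?thesis
    using T_lip[OF L_def hT] by blast
qed


end
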